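(* Let $\mathcal A_+,\mathcal A_-\subseteq\mathbb R^n$ be disjoint finite sets such that $(\mathcal A_+,\mathcal A_-)$ is an extended circuit and $\mathcal A_-\neq\varnothing$. Let $\Delta=\operatorname{conv}(\mathcal A_+)$ and, for $b\in\mathcal A_-$, let $\Gamma_{b,\Delta}$ be the unique face of $\Delta$ with $b\in\operatorname{relint}(\Gamma_{b,\Delta})$. If $f\in\mathcal S(\mathcal A_+,\mathcal A_-)$ satisfies $\operatorname{Sing}_{>0}(f)\neq\varnothing$, then $f=\sum_{b\in\mathcal A_-}q_b$ where each $q_b$ is a copositive circuit signomial with signed support $(\mathcal A_+\cap\Gamma_{b,\Delta},\{b\})$; in particular $f$ is SONC.
   Context: A signomial with signed support $(\mathcal B_+,\mathcal B_-)$ (disjoint finite subsets of $\mathbb R^n$) is $f(x)=\sum_{a\in\mathcal B_+}c_ax^a-\sum_{b\in\mathcal B_-}c_bx^b$ on $\mathbb R^n_{>0}$ with all $c_a,c_b>0$; $\mathcal S(\mathcal B_+,\mathcal B_-)$ is the set of these. With $\mathcal B=\mathcal B_+\cup\mathcal B_-$, $(\mathcal B_+,\mathcal B_-)$ is an extended circuit if either $\#\mathcal B=\#\mathcal B_+=1$ or $\operatorname{conv}(\mathcal B)$ is a simplex with vertex set $\mathcal B_+$; it is a circuit if either $\#\mathcal B=\#\mathcal B_+=1$ or it is an extended circuit with $\#\mathcal B_-=1$ and $\mathcal B_-\subseteq\operatorname{relint}(\operatorname{conv}(\mathcal B_+))$. A circuit signomial has circuit signed support. A signomial is SONC if it is a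 finite sum of circuit signomials that are copositive (nonnegative on $\mathbb R^n_{>0}$). $\operatorname{Sing}_{>0}(f)$ is the set of $x\in\mathbb R^n_{>0}$ with $f(x)=x_1\partial_{x_1}f(x)=\dots=x_n\partial_{x_n}f(x)=0$. *)

theory Defs
  imports "HOL-Analysis.Analysis"
begin

definition pos_orthant :: "(real^'n) set" where
  "pos_orthant = {x. \<forall>i. x $ i > 0}"

definition mono :: "real^'n \<Rightarrow> real^'n \<Rightarrow> real" where
  "mono x a = (\<Prod>i\<in>UNIV. (x $ i) powr (a $ i))"

definition signomials :: "(real^'n) set \<Rightarrow> (real^'n) set \<Rightarrow> (real^'n \<Rightarrow> real) set" where
  "signomials Bp Bm = {f. \<exists>c. (\<forall>a\<in>Bp \<union> Bm. c a > 0) \<and>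
      (\<forall>x\<in>pos_orthant. f x = (\<Sum>a\<in>Bp. c a * mono x a) - (\<Sum>b\<in>Bm. c b * mono x b))}"

definition extended_circuit :: "(real^'n) set \<Rightarrow> (real^'n) set \<Rightarrow> bool" where
  "extended_circuit Bp Bm \<longleftrightarrow>
     (card (Bp \<union> Bm) = 1 \<and> card Bp = 1) \<or>
     ((\<exists>k. k simplex (convex hull (Bp \<union> Bm))) \<and>
      {v. v extreme_point_of (convex hull (Bp \<union> Bm))} = Bp)"

definition circuit :: "(real^'n) set \<Rightarrow> (real^'n) set \<Rightarrow> bool" where
  "circuit Bp Bm \<longleftrightarrow>
     (card (Bp \<union> Bm) = 1 \<and> card Bp = 1) \<or>
     (extended_circuit Bp Bm \<and> card Bm = 1 \<and> Bm \<subseteq> rel_interior (convex hull Bp))"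

definition copositive :: "(real^'n \<Rightarrow> real) \<Rightarrow> bool" where
  "copositive f \<longleftrightarrow> (\<forall>x\<in>pos_orthant. f x \<ge> 0)"

definition circuit_signomial :: "(real^'n \<Rightarrow> real) \<Rightarrow> bool" where
  "circuit_signomial g \<longleftrightarrow> (\<exists>Bp Bm. finite Bp \<and> finite Bm \<and> Bp \<inter> Bm = {} \<and>
       circuit Bp Bm \<and> g \<in> signomials Bp Bm)"

definition SONC :: "(real^'n \<Rightarrow> real) \<Rightarrow> bool" where
  "SONC f \<longleftrightarrow> (\<exists>(I::nat set) g. finite I \<and>
      (\<forall>i\<in>I. circuit_signomial (g i) \<and> copositive (g i)) \<and>
      (\<forall>x\<in>pos_orthant. f x = (\<Sum>i\<in>I. g i x)))"

definition partial :: "(real^'n \<Rightarrow> real) \<Rightarrow> 'n \<Rightarrow> real^'n \<Rightarrow> real" where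
  "partial f i x = deriv (\<lambda>t. f (\<chi> j. if j = i then t else x $ j)) (x $ i)"

definition Sing_pos :: "(real^'n \<Rightarrow> real) \<Rightarrow> (real^'n) set" where
  "Sing_pos f = {x\<in>pos_orthant. f x = 0 \<and> (\<forall>i. x $ i * partial f i x = 0)}"

definition face_rel :: "(real^'n) \<Rightarrow> (real^'n) set \<Rightarrow> (real^'n) set" where
  "face_rel b \<Delta> = (THE F. F face_of \<Delta> \<and> b \<in> rel_interior F)"

end

theory Submission
  imports Defs
begin

lemma mono_exp:
  assumes "x \<in> pos_orthant"
  shows "mono x a = exp (a \<bullet> (\<chi> i. ln (x$i)))"
proof -
  have "mono x a = (\<Prod>i\<in>UNIV. exp (a$i * ln (x$i)))"
    unfolding mono_def using assms apply (intro prod.cong refl) apply (simp add: pos_orthant_def powr_def) by (metis less_irrefl)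
  also have "\<dots> = exp (\<Sum>i\<in>UNIV. a$i * ln (x$i))" by (simp add: exp_sum)
  finally show ?thesis by (simp add: inner_vec_def)
qed

lemma mono_deriv:
  assumes x: "x \<in> pos_orthant"
  shows "((\<lambda>t. mono (\<chi> j. if j = i then t else x$j) a) has_real_derivative (a$i / x$i * mono x a)) (at (x$i))"
proof -
  define K where "K = (\<Prod>j\<in>UNIV-{i}. (x$j) powr (a$j))"
  have xi: "x$i > 0" using x by (auto simp: pos_orthant_def)
  have eq: "mono (\<chi> j. if j = i then t else x$j) a = t powr (a$i) * K" for t
  proof -
    have "mono (\<chi> j. if j = i then t else x$j) a = (\<Prod>j\<in>UNIV. (if j = i then t else x$j) powr (a$j))"
      by (simp add: mono_def)
    also have "\<dots> = (if i = i then t else x$i) powr (a$i) * (\<Prod>j\<in>UNIV-{i}. (if j = i then t else x$j) powr (a$j))"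
      by (rule prod.remove) auto
    also have "(\<Prod>j\<in>UNIV-{i}. (if j = i then t else x$j) powr (a$j)) = K"
      unfolding K_def by (intro prod.cong) auto
    finally show ?thesis by simp
  qed
  have xx: "(\<chi> j. if j = i then x$i else x$j) = x" by (simp add: vec_eq_iff)
  have mx: "mono x a = x$i powr (a$i) * K"
    using eq[of "x$i"] by (simp only: xx)
  have "((\<lambda>t. t powr (a$i) * K) has_real_derivative (a$i * x$i powr (a$i - 1) * K)) (at (x$i))"
    by (rule DERIV_cmult_right[OF has_real_derivative_powr[OF xi]])
  moreover have "a$i * x$i powr (a$i - 1) * K = a$i / x$i * mono x a"
    using xi by (simp add: mx powr_diff)
  ultimately show ?thesis by (simp add: eq)
qed

lemma sing_eqs:
  fixes f :: "real^'n \<Rightarrow> real"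
  assumes fA: "finite Ap" and fB: "finite Am"
    and hf: "\<forall>x\<in>pos_orthant. f x = (\<Sum>a\<in>Ap. c a * mono x a) - (\<Sum>b\<in>Am. c b * mono x b)"
    and xs: "x \<in> Sing_pos f"
  shows "(\<Sum>a\<in>Ap. c a * mono x a) = (\<Sum>b\<in>Am. c b * mono x b)"
    and "(\<Sum>a\<in>Ap. (c a * mono x a) * a$i) = (\<Sum>b\<in>Am. (c b * mono x b) * b$i)"
proof -
  have x: "x \<in> pos_orthant" and f0: "f x = 0" and pd: "x$i * partial f i x = 0"
    using xs by (auto simp: Sing_pos_def)
  show "(\<Sum>a\<in>Ap. c a * mono x a) = (\<Sum>b\<in>Am. c b * mono x b)"
    using hf x f0 by auto
  have xi: "x$i > 0" using x by (auto simp: pos_orthant_def)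
  define p where "p t = (\<chi> j. if j = i then t else x$j)" for t
  define F where "F t = (\<Sum>a\<in>Ap. c a * mono (p t) a) - (\<Sum>b\<in>Am. c b * mono (p t) b)" for t
  define D where "D = (\<Sum>a\<in>Ap. c a * (a$i / x$i * mono x a)) - (\<Sum>b\<in>Am. c b * (b$i / x$i * mono x b))"
  have der: "(F has_real_derivative D) (at (x$i))"
    unfolding F_def D_def p_def
    by (intro DERIV_diff DERIV_sum DERIV_cmult mono_deriv x)
  have Feq: "F t = f (p t)" if "t \<in> {0<..}" for t
  proof -
    have "p t \<in> pos_orthant" using that x by (auto simp: p_def pos_orthant_def)
    then show ?thesis using hf by (simp add: F_def)
  qed
  have "((\<lambda>t. f (p t)) has_real_derivative D) (at (x$i))"
    by (rule has_field_derivative_transform_within_open[OF der, of "{0<..}"]) (use xi Feq in auto)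
  then have "partial f i x = D" unfolding partial_def p_def by (rule DERIV_imp_deriv)
  with pd have "x$i * D = 0" by simp
  moreover have "x$i * D = (\<Sum>a\<in>Ap. (c a * mono x a) * a$i) - (\<Sum>b\<in>Am. (c b * mono x b) * b$i)"
    using xi unfolding D_def by (simp add: right_diff_distrib sum_distrib_left field_simps)
  ultimately show "(\<Sum>a\<in>Ap. (c a * mono x a) * a$i) = (\<Sum>b\<in>Am. (c b * mono x b) * b$i)"
    by simp
qed

lemma geom:
  fixes Ap Am :: "(real^'n) set"
  assumes "finite Ap" "finite Am" "Ap \<inter> Am = {}" "extended_circuit Ap Am" "Am \<noteq> {}"
  shows "\<not> affine_dependent Ap \<and> Am \<subseteq> convex hull Ap"
proof -
  have not1: "\<not> (card (Ap \<union> Am) = 1 \<and> card Ap = 1)"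
  proof
    assume h: "card (Ap \<union> Am) = 1 \<and> card Ap = 1"
    then obtain z where z: "Ap \<union> Am = {z}" by (meson card_1_singletonE)
    from h obtain w where w: "Ap = {w}" by (meson card_1_singletonE)
    from assms(5) obtain y where "y \<in> Am" by blast
    then show False using z w assms(3) by auto
  qed
  with assms(4) obtain k where k: "k simplex (convex hull (Ap \<union> Am))"
    and ext: "{v. v extreme_point_of (convex hull (Ap \<union> Am))} = Ap"
    unfolding extended_circuit_def by blast
  from k obtain C where C: "\<not> affine_dependent C" "convex hull (Ap \<union> Am) = convex hull C"
    unfolding simplex_def by metis
  have "C = Ap" using ext C extreme_point_of_convex_hull_affine_independent[OF C(1)] by auto
  then show ?thesis using C hull_subset[of "Ap \<union> Am" convex] by auto
qed

lemma zero_outside: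
  fixes l :: "'a \<Rightarrow> real"
  assumes "\<forall>a\<in>Ap. 0 \<le> l a" "i \<in> Ap - {a\<in>Ap. l a > 0}"
  shows "l i = 0"
proof -
  have "0 \<le> l i" "\<not> 0 < l i" using assms by auto
  then show ?thesis by linarith
qed

lemma face_part:
  fixes Ap :: "(real^'n) set" and b :: "real^'n"
  assumes fA: "finite Ap" and ind: "\<not> affine_dependent Ap" and bA: "b \<notin> Ap"
    and l0: "\<forall>a\<in>Ap. 0 \<le> l a" and l1: "sum l Ap = 1" and lb: "(\<Sum>a\<in>Ap. l a *\<^sub>R a) = b"
    and S: "S = {a\<in>Ap. l a > 0}"
  shows "face_rel b (convex hull Ap) = convex hull S"
    and "Ap \<inter> convex hull S = S"
    and "circuit S {b}"
    and "S \<noteq> {}" and "b \<notin> S" and "finite S"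
    and "sum l S = 1" and "(\<Sum>a\<in>S. l a *\<^sub>R a) = b"
proof -
  show fS: "finite S" using fA S by auto
  have SA: "S \<subseteq> Ap" using S by auto
  have indS: "\<not> affine_dependent S" using affine_independent_subset[OF ind SA] .
  show s1: "sum l S = 1"
  proof -
    have "sum l S = sum l Ap"
      by (rule sum.mono_neutral_left[OF fA SA]) (use zero_outside[OF l0] S in simp)
    then show ?thesis using l1 by simp
  qed
  show sb: "(\<Sum>a\<in>S. l a *\<^sub>R a) = b"
  proof -
    have "(\<Sum>a\<in>S. l a *\<^sub>R a) = (\<Sum>a\<in>Ap. l a *\<^sub>R a)"
      by (rule sum.mono_neutral_left[OF fA SA]) (use zero_outside[OF l0] S in simp)
    then show ?thesis using lb by simp
  qed
  show "S \<noteq> {}" using s1 by auto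
  show "b \<notin> S" using bA S by auto
  have brel: "b \<in> rel_interior (convex hull S)"
    unfolding rel_interior_convex_hull_explicit[OF indS]
    using s1 sb S by auto
  have face: "convex hull S face_of convex hull Ap"
    using face_of_convex_hull_affine_independent[OF ind] SA by blast
  show "face_rel b (convex hull Ap) = convex hull S"
    unfolding face_rel_def
  proof (rule the_equality)
    show "convex hull S face_of convex hull Ap \<and> b \<in> rel_interior (convex hull S)"
      using face brel by blast
    fix F assume "F face_of convex hull Ap \<and> b \<in> rel_interior F"
    then show "F = convex hull S" using face_of_eq[OF _ face, of F] brel by blast
  qed
  show "Ap \<inter> convex hull S = S"
  proof
    show "S \<subseteq> Ap \<inter> convex hull S" using SA hull_subset[of S convex] by blast
    show "Ap \<inter> convex hull S \<subseteq> S"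
    proof
      fix a assume a: "a \<in> Ap \<inter> convex hull S"
      show "a \<in> S"
      proof (rule ccontr)
        assume "a \<notin> S"
        then have "S \<subseteq> Ap - {a}" using SA by blast
        then have "convex hull S \<subseteq> affine hull (Ap - {a})"
          by (meson convex_hull_subset_affine_hull hull_mono subset_trans)
        then have "a \<in> affine hull (Ap - {a})" using a by blast
        then show False using ind a unfolding affine_dependent_def by blast
      qed
    qed
  qed
  have ins: "S \<union> {b} = insert b S" by simp
  have chb: "convex hull (S \<union> {b}) = convex hull S"
    using brel rel_interior_subset
    by (metis Un_commute hull_insert hull_redundant insert_is_Un subsetD)
  show "circuit S {b}"
    unfolding circuit_def extended_circuit_def
  proof (intro disjI2 conjI)
    show "\<exists>k. k simplex convex hull (S \<union> {b})"
      unfolding chb simplex_def using indS by (intro exI[of _ "int (card S) - 1"] exI[of _ S]) simp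
    show "{v. v extreme_point_of convex hull (S \<union> {b})} = S"
      unfolding chb using extreme_point_of_convex_hull_affine_independent[OF indS] by blast
    show "card {b} = 1" by simp
    show "{b} \<subseteq> rel_interior (convex hull S)" using brel by simp
  qed
qed

lemma amgm:
  fixes l s :: "'a \<Rightarrow> real"
  assumes "finite S" "\<forall>a\<in>S. 0 \<le> l a" "sum l S = 1"
  shows "exp (\<Sum>a\<in>S. l a * s a) \<le> (\<Sum>a\<in>S. l a * exp (s a))"
proof -
  define m where "m = (\<Sum>a\<in>S. l a * s a)"
  have "l a * (exp m * (1 + (s a - m))) \<le> l a * exp (s a)" if "a \<in> S" for a
  proof -
    have "exp m * (1 + (s a - m)) \<le> exp m * exp (s a - m)"
      by (intro mult_left_mono exp_ge_add_one_self) simp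
    also have "\<dots> = exp (s a)" by (simp add: exp_diff)
    finally show ?thesis using assms(2) that by (intro mult_left_mono) auto
  qed
  then have "(\<Sum>a\<in>S. l a * (exp m * (1 + (s a - m)))) \<le> (\<Sum>a\<in>S. l a * exp (s a))"
    by (rule sum_mono)
  moreover have "(\<Sum>a\<in>S. l a * (exp m * (1 + (s a - m)))) = exp m * (sum l S + m - m * sum l S)"
  proof -
    have "(\<Sum>a\<in>S. l a * (exp m * (1 + (s a - m)))) = (\<Sum>a\<in>S. exp m * l a + exp m * (l a * s a) - (exp m * m) * l a)"
      by (rule sum.cong) (auto simp: algebra_simps)
    also have "\<dots> = exp m * sum l S + exp m * m - (exp m * m) * sum l S"
      by (simp add: sum.distrib sum_subtractf sum_distrib_left[symmetric] m_def)
    finally show ?thesis by (simp add: algebra_simps)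
  qed
  ultimately show ?thesis using assms(3) by (simp add: m_def)
qed

theorem proposition3p10:
  fixes Ap Am :: "(real^'n) set" and f :: "real^'n \<Rightarrow> real"
  assumes "finite Ap" and "finite Am" and "Ap \<inter> Am = {}"
    and "extended_circuit Ap Am" and "Am \<noteq> {}"
    and "f \<in> signomials Ap Am"
    and "Sing_pos f \<noteq> {}"
  shows "(\<exists>q. (\<forall>b\<in>Am. copositive (q b) \<and> circuit (Ap \<inter> face_rel b (convex hull Ap)) {b}
                      \<and> q b \<in> signomials (Ap \<inter> face_rel b (convex hull Ap)) {b})
             \<and> (\<forall>x\<in>pos_orthant. f x = (\<Sum>b\<in>Am. q b x)))
         \<and> SONC f"
proof -
  note fA = assms(1) and fB = assms(2) and disj = assms(3)
  obtain c where cpos: "\<forall>a\<in>Ap \<union> Am. c a > 0"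
    and hf: "\<forall>x\<in>pos_orthant. f x = (\<Sum>a\<in>Ap. c a * mono x a) - (\<Sum>b\<in>Am. c b * mono x b)"
    using assms(6) unfolding signomials_def by blast
  obtain x0 where x0: "x0 \<in> Sing_pos f" using assms(7) by blast
  have x0p: "x0 \<in> pos_orthant" using x0 by (simp add: Sing_pos_def)
  have G: "\<not> affine_dependent Ap \<and> Am \<subseteq> convex hull Ap" using geom[OF assms(1-5)] .
  then have ind: "\<not> affine_dependent Ap" and AmC: "Am \<subseteq> convex hull Ap" by auto
  have "\<forall>b\<in>Am. \<exists>u. (\<forall>a\<in>Ap. 0 \<le> u a) \<and> sum u Ap = 1 \<and> (\<Sum>a\<in>Ap. u a *\<^sub>R a) = b"
    using AmC convex_hull_finite[OF fA] by blast
  then obtain l where l: "\<And>b. b \<in> Am \<Longrightarrow> (\<forall>a\<in>Ap. 0 \<le> l b a) \<and> sum (l b) Ap = 1 \<and> (\<Sum>a\<in>Ap. l b a *\<^sub>R a) = b"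
    by metis
  define S where "S b = {a\<in>Ap. l b a > 0}" for b
  have bA: "b \<notin> Ap" if "b \<in> Am" for b using that disj by blast
  have lA: "\<forall>a\<in>Ap. 0 \<le> l b a" "sum (l b) Ap = 1" "(\<Sum>a\<in>Ap. l b a *\<^sub>R a) = b" if "b \<in> Am" for b
    using l[OF that] by auto
  note FP = face_part[OF fA ind _ _ _ _ S_def]
  define M where "M a = mono x0 a" for a
  have Mpos: "M a > 0" for a unfolding M_def mono_exp[OF x0p] by simp
  define C where "C a = c a * M a" for a
  define D where "D b = c b * M b" for b
  have Dpos: "D b > 0" if "b \<in> Am" for b using that cpos Mpos by (simp add: D_def)
  define u where "u a = C a - (\<Sum>b\<in>Am. D b * l b a)" for a
  have su: "sum u Ap = 0"
  proof -
    have "sum u Ap = (\<Sum>a\<in>Ap. C a) - (\<Sum>b\<in>Am. D b * sum (l b) Ap)"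
      unfolding u_def by (simp add: sum_subtractf sum_distrib_left sum.swap[of _ Ap])
    also have "\<dots> = (\<Sum>a\<in>Ap. C a) - (\<Sum>b\<in>Am. D b)" using l by simp
    also have "\<dots> = 0" using sing_eqs(1)[OF fA fB hf x0] by (simp add: C_def D_def M_def)
    finally show ?thesis .
  qed
  have suv: "(\<Sum>a\<in>Ap. u a *\<^sub>R a) = 0"
  proof -
    have "(\<Sum>a\<in>Ap. u a *\<^sub>R a) = (\<Sum>a\<in>Ap. C a *\<^sub>R a) - (\<Sum>b\<in>Am. D b *\<^sub>R (\<Sum>a\<in>Ap. l b a *\<^sub>R a))"
      unfolding u_def by (simp add: scaleR_left_diff_distrib sum_subtractf scaleR_sum_left scaleR_sum_right sum.swap[of _ Ap])
    also have "\<dots> = (\<Sum>a\<in>Ap. C a *\<^sub>R a) - (\<Sum>b\<in>Am. D b *\<^sub>R b)" using l by simp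
    also have "\<dots> = 0"
    proof -
      have "(\<Sum>a\<in>Ap. C a *\<^sub>R a) $ i = (\<Sum>b\<in>Am. D b *\<^sub>R b) $ i" for i
        using sing_eqs(2)[OF fA fB hf x0, of i] by (simp add: C_def D_def M_def mult.commute mult.left_commute)
      then show ?thesis by (simp add: vec_eq_iff)
    qed
    finally show ?thesis .
  qed
  have u0: "u a = 0" if "a \<in> Ap" for a
    using ind su suv that unfolding affine_dependent_explicit_finite[OF fA] by blast
  have Ceq: "C a = (\<Sum>b\<in>Am. D b * l b a)" if "a \<in> Ap" for a
    using u0[OF that] by (simp add: u_def)
  define cq where "cq b a = (if a = b then c b else D b * l b a / M a)" for b a
  define q where "q b x = (\<Sum>a\<in>S b. cq b a * mono x a) - (\<Sum>b'\<in>{b}. cq b b' * mono x b')" for b x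
  have qsig: "q b \<in> signomials (S b) {b}" if "b \<in> Am" for b
  proof -
    have "\<forall>a\<in>S b \<union> {b}. cq b a > 0"
      using Dpos[OF that] Mpos cpos that bA[OF that] by (auto simp: cq_def S_def)
    then show ?thesis unfolding signomials_def q_def by blast
  qed
  have qcop: "copositive (q b)" if b: "b \<in> Am" for b
    unfolding copositive_def
  proof
    fix x :: "real^'n" assume xp: "x \<in> pos_orthant"
    define v where "v = (\<chi> i. ln (x$i)) - (\<chi> i. ln (x0$i))"
    have ratio: "mono x a / M a = exp (a \<bullet> v)" for a
      unfolding M_def mono_exp[OF xp] mono_exp[OF x0p] v_def
      by (simp add: inner_diff_right exp_diff)
    have l0: "\<forall>a\<in>S b. 0 \<le> l b a" and fS: "finite (S b)" using fA by (auto simp: S_def)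
    have Ssub: "S b \<subseteq> Ap" by (auto simp: S_def)
    have s1: "sum (l b) (S b) = 1" using FP(7)[OF bA[OF b] lA[OF b]] .
    have sb: "(\<Sum>a\<in>S b. l b a *\<^sub>R a) = b" using FP(8)[OF bA[OF b] lA[OF b]] .
    have bv: "b \<bullet> v = (\<Sum>a\<in>S b. l b a * (a \<bullet> v))"
      by (subst sb[symmetric]) (simp add: inner_sum_left)
    have "q b x = (\<Sum>a\<in>S b. D b * l b a * exp (a \<bullet> v)) - D b * exp (b \<bullet> v)"
    proof -
      have "(\<Sum>a\<in>S b. cq b a * mono x a) = (\<Sum>a\<in>S b. D b * l b a * exp (a \<bullet> v))"
      proof (rule sum.cong[OF refl])
        fix a assume "a \<in> S b"
        then have "a \<noteq> b" using bA[OF b] by (auto simp: S_def)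
        then show "cq b a * mono x a = D b * l b a * exp (a \<bullet> v)"
          using ratio[of a, symmetric] Mpos[of a] by (simp add: cq_def)
      qed
      moreover have "cq b b * mono x b = D b * exp (b \<bullet> v)"
        using ratio[of b, symmetric] Mpos[of b] by (simp add: cq_def D_def)
      ultimately show ?thesis by (simp add: q_def)
    qed
    also have "\<dots> = D b * ((\<Sum>a\<in>S b. l b a * exp (a \<bullet> v)) - exp (\<Sum>a\<in>S b. l b a * (a \<bullet> v)))"
      by (simp add: bv sum_distrib_left right_diff_distrib mult.assoc)
    also have "\<dots> \<ge> 0"
      using amgm[OF fS l0 s1, of "\<lambda>a. a \<bullet> v"] Dpos[OF b] by simp
    finally show "q b x \<ge> 0" .
  qed
  have qsum: "f x = (\<Sum>b\<in>Am. q b x)" if xp: "x \<in> pos_orthant" for x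
  proof -
    have inner: "(\<Sum>a\<in>S b. cq b a * mono x a) = (\<Sum>a\<in>Ap. D b * l b a / M a * mono x a)" if b: "b \<in> Am" for b
    proof -
      have Ssub: "S b \<subseteq> Ap" by (auto simp: S_def)
      have "(\<Sum>a\<in>S b. cq b a * mono x a) = (\<Sum>a\<in>S b. D b * l b a / M a * mono x a)"
        by (rule sum.cong[OF refl]) (use bA[OF b] in \<open>auto simp: cq_def S_def\<close>)
      also have "\<dots> = (\<Sum>a\<in>Ap. D b * l b a / M a * mono x a)"
        by (rule sum.mono_neutral_left[OF fA Ssub]) (use zero_outside[OF lA(1)[OF b]] in \<open>simp add: S_def\<close>)
      finally show ?thesis .
    qed
    have "(\<Sum>b\<in>Am. q b x) = (\<Sum>b\<in>Am. \<Sum>a\<in>Ap. D b * l b a / M a * mono x a) - (\<Sum>b\<in>Am. c b * mono x b)"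
    proof -
      have qb: "q b x = (\<Sum>a\<in>Ap. D b * l b a / M a * mono x a) - c b * mono x b" if b: "b \<in> Am" for b
      proof -
        have "q b x = (\<Sum>a\<in>S b. cq b a * mono x a) - c b * mono x b"
          by (simp add: q_def cq_def)
        then show ?thesis using inner[OF b] by simp
      qed
      show ?thesis by (simp add: qb sum_subtractf)
    qed
    also have "(\<Sum>b\<in>Am. \<Sum>a\<in>Ap. D b * l b a / M a * mono x a) = (\<Sum>a\<in>Ap. (\<Sum>b\<in>Am. D b * l b a) / M a * mono x a)"
      by (subst sum.swap) (simp add: sum_divide_distrib sum_distrib_right)
    also have "\<dots> = (\<Sum>a\<in>Ap. c a * mono x a)"
      by (rule sum.cong[OF refl]) (simp add: Ceq[symmetric] C_def Mpos less_imp_neq[OF Mpos, symmetric])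
    finally show ?thesis using hf xp by simp
  qed
  have part1: "\<exists>q. (\<forall>b\<in>Am. copositive (q b) \<and> circuit (Ap \<inter> face_rel b (convex hull Ap)) {b}
                      \<and> q b \<in> signomials (Ap \<inter> face_rel b (convex hull Ap)) {b})
             \<and> (\<forall>x\<in>pos_orthant. f x = (\<Sum>b\<in>Am. q b x))"
  proof (intro exI[of _ q] conjI ballI)
    fix b assume b: "b \<in> Am"
    have fr: "Ap \<inter> face_rel b (convex hull Ap) = S b"
      using FP(1,2)[OF bA[OF b] lA[OF b]] l[OF b] by auto
    show "copositive (q b)" using qcop[OF b] .
    show "circuit (Ap \<inter> face_rel b (convex hull Ap)) {b}" using FP(3)[OF bA[OF b] lA[OF b]] l[OF b] fr by auto
    show "q b \<in> signomials (Ap \<inter> face_rel b (convex hull Ap)) {b}" using qsig[OF b] fr by simp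
  next
    fix x :: "real^'n" assume "x \<in> pos_orthant" then show "f x = (\<Sum>b\<in>Am. q b x)" by (rule qsum)
  qed
  have csig: "circuit_signomial (q b)" if b: "b \<in> Am" for b
    unfolding circuit_signomial_def
    using FP(3,5,6)[OF bA[OF b] lA[OF b]] l[OF b] qsig[OF b] by (intro exI[of _ "S b"] exI[of _ "{b}"]) auto
  obtain h where h: "bij_betw h {0..<card Am} Am" using ex_bij_betw_nat_finite[OF fB] by blast
  have "SONC f"
    unfolding SONC_def
  proof (intro exI[of _ "{0..<card Am}"] exI[of _ "\<lambda>i. q (h i)"] conjI ballI)
    show "finite {0..<card Am}" by simp
    fix i assume "i \<in> {0..<card Am}"
    then have "h i \<in> Am" using h bij_betwE by blast
    then show "circuit_signomial (q (h i))" "copositive (q (h i))" using csig qcop by auto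
  next
    fix x :: "real^'n" assume "x \<in> pos_orthant"
    then have "f x = (\<Sum>b\<in>Am. q b x)" by (rule qsum)
    also have "\<dots> = (\<Sum>i\<in>{0..<card Am}. q (h i) x)"
      using sum.reindex_bij_betw[OF h, of "\<lambda>b. q b x"] by simp
    finally show "f x = (\<Sum>i\<in>{0..<card Am}. q (h i) x)" .
  qed
  with part1 show ?thesis by blast
qed

end
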